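(* Assume the setting below and $p>\sum_{k=0}^{N-1}L_k$. For $0\le j\le N-1$ and $x\in\mathbb R$ define $$\alpha_{GB,j}(x)=\sum_{k=j}^{j+N-1}L^G_k\,C\left\lceil\frac{x-o_{k,j}+L^G_k+\sum_{q=j}^{k}L_q}{p-\sum_{q=j}^{j+N-1}L_q}\right\rceil .$$ Then for all $s\in\mathbb R$ and $t\ge0$, $$C\cdot\Delta t_{GB}(s,s+t)\le\max_{0\le j\le N-1}\alpha_{GB,j}\big(t-\Delta t_{ST}(s,s+t)\big).$$
   Context: Fix an output port with physical link rate $C>0$. Its gate control list (GCL) is periodic with period $p>0$ and contains $N\ge 1$ scheduled-traffic (ST) windows per period. Window $k\in\{0,\dots,N-1\}$ is the interval $[o_k,o_k+L_k)$, where $0\le o_0<o_1<\dots<o_{N-1}<p$, $L_k\ge 0$, $o_k+L_k\le o_{k+1}$ for $k<N-1$ and $o_{N-1}+L_{N-1}\le o_0+p$. Indices are extended to all integers periodically: $o_{k+N}=o_k+p$, $L_{k+N}=L_k$. Relative offsets are $o_{j,i}=o_j-o_i$. Let $S=\bigcup_{k\in\mathbb Z}[o_k,o_k+L_k)$ and for $s\le t$ let $\Delta t_{ST}(s,t)$ be the Lebesgue measure of $S\cap[s,t]$. Guard bands: for each $k$, $L^G_k=\min\{\ell/C,\ o_k-(o_{k-1}+L_{k-1})\}$, where $\ell>0$ is the maximal frame size of the AVB flows of classes $M_1,\dots,M_i$ competing at the port; thus $L^G_{k+N}=L^G_k$ and the guard band of window $k$ is $[o_k-L^G_k,o_k)$.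 Let $G=\bigcup_{k\in\mathbb Z}[o_k-L^G_k,o_k)$ and for $s\le t$ let $\Delta t_{GB}(s,t)$ be the Lebesgue measure of $G\cap[s,t]$. *)

theory Defs
  imports "HOL-Analysis.Analysis"
begin

text \<open>GCL with N windows per period p; offsets o k and lengths L k given for k < N,
  extended periodically to all integer indices.\<close>

definition oe :: "nat \<Rightarrow> real \<Rightarrow> (nat \<Rightarrow> real) \<Rightarrow> int \<Rightarrow> real" where
  "oe N p off k = off (nat (k mod int N)) + p * of_int (k div int N)"

definition Le :: "nat \<Rightarrow> (nat \<Rightarrow> real) \<Rightarrow> int \<Rightarrow> real" where
  "Le N L k = L (nat (k mod int N))"

text \<open>Guard band length of window k; ell is the maximal AVB frame size.\<close>
definition LG :: "nat \<Rightarrow> real \<Rightarrow> (nat \<Rightarrow> real) \<Rightarrow> (nat \<Rightarrow> real) \<Rightarrow> real \<Rightarrow> real \<Rightarrow> int \<Rightarrow> real" where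
  "LG N p off L C ell k = min (ell / C) (oe N p off k - (oe N p off (k - 1) + Le N L (k - 1)))"

definition ST_set :: "nat \<Rightarrow> real \<Rightarrow> (nat \<Rightarrow> real) \<Rightarrow> (nat \<Rightarrow> real) \<Rightarrow> real set" where
  "ST_set N p off L = (\<Union>k::int. {oe N p off k ..< oe N p off k + Le N L k})"

definition GB_set :: "nat \<Rightarrow> real \<Rightarrow> (nat \<Rightarrow> real) \<Rightarrow> (nat \<Rightarrow> real) \<Rightarrow> real \<Rightarrow> real \<Rightarrow> real set" where
  "GB_set N p off L C ell = (\<Union>k::int. {oe N p off k - LG N p off L C ell k ..< oe N p off k})"

definition dt_ST :: "nat \<Rightarrow> real \<Rightarrow> (nat \<Rightarrow> real) \<Rightarrow> (nat \<Rightarrow> real) \<Rightarrow> real \<Rightarrow> real \<Rightarrow> real" where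
  "dt_ST N p off L s t = measure lebesgue (ST_set N p off L \<inter> {s..t})"

definition dt_GB :: "nat \<Rightarrow> real \<Rightarrow> (nat \<Rightarrow> real) \<Rightarrow> (nat \<Rightarrow> real) \<Rightarrow> real \<Rightarrow> real \<Rightarrow> real \<Rightarrow> real \<Rightarrow> real" where
  "dt_GB N p off L C ell s t = measure lebesgue (GB_set N p off L C ell \<inter> {s..t})"

definition alpha_GB :: "nat \<Rightarrow> real \<Rightarrow> (nat \<Rightarrow> real) \<Rightarrow> (nat \<Rightarrow> real) \<Rightarrow> real \<Rightarrow> real \<Rightarrow> nat \<Rightarrow> real \<Rightarrow> real" where
  "alpha_GB N p off L C ell j x =
     (\<Sum>k \<in> {int j .. int j + int N - 1}.
        LG N p off L C ell k * C *
        of_int \<lceil>(x - (oe N p off k - oe N p off (int j)) + LG N p off L C ell k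
                  + (\<Sum>q \<in> {int j .. k}. Le N L q))
                / (p - (\<Sum>q \<in> {int j .. int j + int N - 1}. Le N L q))\<rceil>)"

end

theory Submission
  imports Defs
begin


lemma sum_int_concat:
  fixes f :: "int \<Rightarrow> real"
  assumes "a \<le> b" "b \<le> c"
  shows "(\<Sum>q\<in>{a..<b}. f q) + (\<Sum>q\<in>{b..<c}. f q) = (\<Sum>q\<in>{a..<c}. f q)"
proof -
  have "{a..<c} = {a..<b} \<union> {b..<c}" using assms by auto
  then show ?thesis by (simp add: sum.union_disjoint)
qed

lemma sum_single_int:
  fixes f :: "int \<Rightarrow> real"
  shows "(\<Sum>q\<in>{r..<r+1}. f q) = f r"
proof -
  have "{r..<r+1} = {r}" by auto
  then show ?thesis by simp
qed

locale gcl =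
  fixes N :: nat and p C ell :: real and off L :: "nat \<Rightarrow> real"
  assumes Cpos: "C > 0" and ppos: "p > 0" and N1: "N \<ge> 1" and ellpos: "ell > 0"
    and off0: "0 \<le> off 0"
    and offmono: "\<And>k. k + 1 < N \<Longrightarrow> off k < off (k + 1)"
    and offlast: "off (N - 1) < p"
    and Lnn: "\<And>k. k < N \<Longrightarrow> L k \<ge> 0"
    and gap: "\<And>k. k + 1 < N \<Longrightarrow> off k + L k \<le> off (k + 1)"
    and gaplast: "off (N - 1) + L (N - 1) \<le> off 0 + p"
    and ptot: "p > (\<Sum>k<N. L k)"
begin

abbreviation ob where "ob k \<equiv> oe N p off k"
abbreviation Lb where "Lb k \<equiv> Le N L k"
abbreviation g where "g k \<equiv> LG N p off L C ell k"

lemma oe_dec: "r < N \<Longrightarrow> ob (int r + int N * d) = off r + p * of_int d"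
  unfolding oe_def using N1 by simp

lemma Le_dec: "r < N \<Longrightarrow> Lb (int r + int N * d) = L r"
  unfolding Le_def using N1 by simp

lemma dec: obtains r d where "r < N" "q = int r + int N * d"
proof -
  have "q = int (nat (q mod int N)) + int N * (q div int N)"
    using N1 by simp
  moreover have "nat (q mod int N) < N" using N1
    by (simp add: nat_less_iff)
  ultimately show ?thesis using that by blast
qed

lemma oe_shift: "ob (q + int N * m) = ob q + p * of_int m"
  unfolding oe_def using N1 by (simp add: algebra_simps)

lemma Le_shift: "Lb (q + int N * m) = Lb q"
  unfolding Le_def using N1 by simp

lemma LG_shift: "g (q + int N * m) = g q"
proof -
  have "q + int N * m - 1 = (q - 1) + int N * m" by simp
  then show ?thesis unfolding LG_def by (simp only: oe_shift Le_shift)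
qed

lemma Le_nn: "Lb q \<ge> 0"
proof -
  obtain r d where "r < N" "q = int r + int N * d" by (rule dec)
  then show ?thesis using Le_dec Lnn by simp
qed

lemma step: "ob q + Lb q \<le> ob (q + 1)" "ob q < ob (q + 1)"
proof -
  obtain r d where rd: "r < N" "q = int r + int N * d" by (rule dec)
  have "ob q + Lb q \<le> ob (q + 1) \<and> ob q < ob (q + 1)"
  proof (cases "r + 1 < N")
    case True
    have e: "q + 1 = int (r+1) + int N * d" using rd by simp
    have "ob (q+1) = off (r+1) + p * of_int d" unfolding e by (rule oe_dec[OF True])
    moreover have "ob q = off r + p * of_int d" "Lb q = L r" using rd oe_dec Le_dec by auto
    ultimately show ?thesis using True gap offmono by simp
  next
    case False
    then have r: "r = N - 1" using rd by simp
    have e: "q + 1 = int 0 + int N * (d + 1)" using rd r N1 by (simp add: algebra_simps)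
    have "ob (q+1) = off 0 + p * of_int (d+1)" unfolding e by (rule oe_dec) (use N1 in simp)
    moreover have "ob q = off r + p * of_int d" "Lb q = L r" using rd oe_dec Le_dec by auto
    ultimately show ?thesis using r gaplast offlast off0
      by (simp add: algebra_simps)
  qed
  then show "ob q + Lb q \<le> ob (q + 1)" "ob q < ob (q + 1)" by auto
qed

lemma chain: "i \<le> r \<Longrightarrow> ob i + (\<Sum>q\<in>{i..<r}. Lb q) \<le> ob r"
proof (induction r rule: int_ge_induct)
  case base then show ?case by simp
next
  case (step r)
  have "(\<Sum>q\<in>{i..<r+1}. Lb q) = (\<Sum>q\<in>{i..<r}. Lb q) + Lb r"
    using sum_int_concat[of i r "r+1" Lb] step.hyps sum_single_int[where f=Lb and r=r] by simp
  then show ?case using step.IH gcl.step(1)[OF gcl_axioms, of r] by simp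
qed

lemma strict_mono_oe: "i < r \<Longrightarrow> ob i < ob r"
proof -
  assume "i < r"
  then have "i + 1 \<le> r" by simp
  then have "ob (i+1) \<le> ob r"
  proof (induction r rule: int_ge_induct)
    case base then show ?case by simp
  next
    case (step r) then show ?case using gcl.step(2)[OF gcl_axioms, of r] by simp
  qed
  then show ?thesis using step(2)[of i] by simp
qed

lemma mono_oe_iff: "ob i < ob r \<longleftrightarrow> i < r"
  using strict_mono_oe[of i r] strict_mono_oe[of r i] by (metis less_asym linorder_neqE)

lemma LG_nn: "g q \<ge> 0"
  unfolding LG_def using step(1)[of "q - 1"] Cpos ellpos by simp

definition Lt where "Lt = (\<Sum>k<N. L k)"

lemma window_sum: "(\<Sum>q\<in>{a..<a + int N}. Lb q) = Lt"
proof -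
  define f where "f a = (\<Sum>q\<in>{a..<a + int N}. Lb q)" for a
  have sh: "f (a + 1) = f a" for a
  proof -
    have "f a + Lb (a + int N) = (\<Sum>q\<in>{a..<a + int N + 1}. Lb q)"
      unfolding f_def using sum_int_concat[of a "a + int N" "a + int N + 1" Lb] sum_single_int[where f=Lb and r="a + int N"] by simp
    also have "\<dots> = Lb a + f (a + 1)"
      unfolding f_def using sum_int_concat[of a "a + 1" "a + int N + 1" Lb] N1 sum_single_int[where f=Lb and r=a] by (simp add: ac_simps)
    finally show ?thesis using Le_shift[of a 1] by simp
  qed
  have "f a = f 0"
  proof (induction a rule: int_induct[where k=0])
    case base then show ?case by simp
  next
    case (step1 i) then show ?case using sh by simp
  next
    case (step2 i) then show ?case using sh[of "i - 1"] by simp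
  qed
  moreover have "f 0 = Lt"
  proof -
    have "f 0 = (\<Sum>q\<in>int ` {0..<N}. Lb q)" unfolding f_def by (simp add: image_int_atLeastLessThan)
    also have "\<dots> = (\<Sum>i\<in>{0..<N}. Lb (int i))" by (simp add: sum.reindex)
    also have "\<dots> = Lt" unfolding Lt_def Le_def by (simp add: atLeast0LessThan)
    finally show ?thesis .
  qed
  ultimately show ?thesis unfolding f_def by simp
qed

lemma multi_sum: "(\<Sum>q\<in>{a..<a + int N * int m}. Lb q) = of_nat m * Lt"
proof (induction m)
  case 0 then show ?case by simp
next
  case (Suc m)
  have "(\<Sum>q\<in>{a..<a + int N * int (Suc m)}. Lb q) =
     (\<Sum>q\<in>{a..<a + int N * int m}. Lb q) + (\<Sum>q\<in>{a + int N * int m..<a + int N * int m + int N}. Lb q)"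
    using sum_int_concat[of a "a + int N * int m" "a + int N * int (Suc m)" Lb]
    by (simp add: algebra_simps)
  then show ?case using Suc window_sum[of "a + int N * int m"] by (simp add: algebra_simps)
qed

end



context gcl begin

definition A where
  "A J x = (\<Sum>k \<in> {J .. J + int N - 1}.
        g k * C * of_int \<lceil>(x - (ob k - ob J) + g k + (\<Sum>q \<in> {J .. k}. Lb q))
                / (p - (\<Sum>q \<in> {J .. J + int N - 1}. Lb q))\<rceil>)"

lemma alpha_eq: "alpha_GB N p off L C ell j x = A (int j) x"
  unfolding alpha_GB_def A_def by simp

lemma sum_shift_int:
  fixes f :: "int \<Rightarrow> real"
  shows "(\<Sum>q\<in>{a+c..b+c}. f q) = (\<Sum>q\<in>{a..b}. f (q + c))"
  by (rule sum.reindex_bij_witness[of _ "\<lambda>q. q + c" "\<lambda>q. q - c"]) auto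

lemma A_shift: "A (J + int N * m) x = A J x"
proof -
  have "A (J + int N * m) x = (\<Sum>k \<in> {J + int N * m .. (J + int N - 1) + int N * m}.
        g k * C * of_int \<lceil>(x - (ob k - ob (J + int N * m)) + g k + (\<Sum>q \<in> {J + int N * m .. k}. Lb q))
                / (p - (\<Sum>q \<in> {J + int N * m .. (J + int N - 1) + int N * m}. Lb q))\<rceil>)"
    unfolding A_def by (simp add: algebra_simps)
  also have "\<dots> = (\<Sum>k \<in> {J .. J + int N - 1}.
        g (k + int N * m) * C * of_int \<lceil>(x - (ob (k + int N * m) - ob (J + int N * m)) + g (k + int N * m)
           + (\<Sum>q \<in> {J + int N * m .. k + int N * m}. Lb q))
                / (p - (\<Sum>q \<in> {J + int N * m .. (J + int N - 1) + int N * m}. Lb q))\<rceil>)"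
    by (rule sum_shift_int)
  also have "\<dots> = A J x"
    unfolding A_def
    by (simp only: sum_shift_int LG_shift Le_shift oe_shift) simp
  finally show ?thesis .
qed

lemma closed_window: "{J .. J + int N - 1} = {J ..< J + int N}" by auto

lemma den_eq: "(\<Sum>q \<in> {J .. J + int N - 1}. Lb q) = Lt"
  using window_sum closed_window by simp

lemma Lt_lt: "Lt < p" using ptot unfolding Lt_def by simp

lemma ceil_nonneg:
  assumes x: "x \<ge> 0" and k: "J \<le> k" "k \<le> J + int N - 1"
  shows "\<lceil>(x - (ob k - ob J) + g k + (\<Sum>q \<in> {J .. k}. Lb q)) / (p - Lt)\<rceil> \<ge> 0"
proof -
  have s1: "(\<Sum>q \<in> {J .. k}. Lb q) = (\<Sum>q \<in> {J ..< k+1}. Lb q)"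
    by (rule sum.cong) auto
  have s2: "(\<Sum>q \<in> {J ..< k+1}. Lb q) + (\<Sum>q \<in> {k+1 ..< J + int N}. Lb q) = Lt"
    using sum_int_concat[of J "k+1" "J + int N" Lb] k window_sum[of J] by simp
  have c: "ob (k+1) + (\<Sum>q \<in> {k+1 ..< J + int N}. Lb q) \<le> ob (J + int N)"
    using chain[of "k+1" "J + int N"] k by simp
  have "ob (J + int N) = ob J + p" using oe_shift[of J 1] by simp
  moreover have "ob k < ob (k+1)" by (rule step(2))
  moreover have "g k \<ge> 0" by (rule LG_nn)
  ultimately have "x - (ob k - ob J) + g k + (\<Sum>q \<in> {J .. k}. Lb q) > -(p - Lt)"
    using s1 s2 c x by linarith
  then have "(x - (ob k - ob J) + g k + (\<Sum>q \<in> {J .. k}. Lb q)) / (p - Lt) > -1"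
    using Lt_lt by (simp add: divide_simps)
  then show ?thesis by linarith
qed

end



context gcl begin

abbreviation S where "S \<equiv> ST_set N p off L"
abbreviation G where "G \<equiv> GB_set N p off L C ell"

lemma S_sets: "S \<in> sets lebesgue" unfolding ST_set_def by auto
lemma G_sets: "G \<in> sets lebesgue" unfolding GB_set_def by auto

lemma diff_measure:
  assumes "a \<le> b"
  shows "measure lebesgue ({a..b} - S) = (b - a) - measure lebesgue (S \<inter> {a..b})"
proof -
  have "measure lebesgue ({a..b} - (S \<inter> {a..b})) = measure lebesgue {a..b} - measure lebesgue (S \<inter> {a..b})"
    by (rule measure_Diff) (use S_sets in \<open>auto simp: emeasure_lborel_Icc_eq\<close>)
  moreover have "{a..b} - (S \<inter> {a..b}) = {a..b} - S" by auto
  ultimately show ?thesis using assms by simp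
qed

lemma nonST_lower:
  assumes "t \<ge> 0" "s \<le> a" "a \<le> e" "e \<le> s + t"
  shows "t - measure lebesgue (S \<inter> {s..s+t}) \<ge> (e - a) - measure lebesgue (S \<inter> {a..e})"
proof -
  have "measure lebesgue ({a..e} - S) \<le> measure lebesgue ({s..s+t} - S)"
  proof (rule measure_mono_fmeasurable)
    show "{a..e} - S \<subseteq> {s..s+t} - S" using assms by auto
    show "{a..e} - S \<in> sets lebesgue" using S_sets by auto
    show "{s..s+t} - S \<in> fmeasurable lebesgue"
      by (rule fmeasurableI2[of "{s..s+t}"]) (use S_sets lmeasurable_interval in auto)
  qed
  then show ?thesis using diff_measure[of a e] diff_measure[of s "s+t"] assms by simp
qed

lemma cover:
  assumes "J \<le> K" "e < ob K"
  shows "measure lebesgue (S \<inter> {ob J..e}) \<le> (\<Sum>q\<in>{J..<K}. Lb q)"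
proof -
  define B where "B = (\<Union>q\<in>{J..<K}. {ob q..<ob q + Lb q})"
  have sub: "S \<inter> {ob J..e} \<subseteq> B"
  proof
    fix y assume y: "y \<in> S \<inter> {ob J..e}"
    then obtain q where q: "ob q \<le> y" "y < ob q + Lb q" unfolding ST_set_def by auto
    have "q < K"
    proof (rule ccontr)
      assume "\<not> q < K"
      then have "ob K \<le> ob q" using mono_oe_iff[of q K] mono_oe_iff[of K q] by (cases "q = K") auto
      then show False using q y assms by auto
    qed
    moreover have "J \<le> q"
    proof (rule ccontr)
      assume "\<not> J \<le> q"
      then have "q + 1 \<le> J" by simp
      then have "ob (q+1) \<le> ob J" using mono_oe_iff[of "q+1" J] by (cases "q + 1 = J") auto
      then show False using q y step(1)[of q] by auto
    qed
    ultimately show "y \<in> B" unfolding B_def using q by auto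
  qed
  have Bsub: "B \<subseteq> {ob J..ob K}"
  proof
    fix y assume "y \<in> B"
    then obtain q where q: "J \<le> q" "q < K" "ob q \<le> y" "y < ob q + Lb q" unfolding B_def by auto
    have "ob J \<le> ob q" using mono_oe_iff[of J q] q by (cases "J = q") auto
    moreover have "ob (q+1) \<le> ob K" using mono_oe_iff[of "q+1" K] q by (cases "q + 1 = K") auto
    ultimately show "y \<in> {ob J..ob K}" using q step(1)[of q] by auto
  qed
  have Bsets: "B \<in> sets lebesgue" unfolding B_def by auto
  have "measure lebesgue (S \<inter> {ob J..e}) \<le> measure lebesgue B"
    by (rule measure_mono_fmeasurable[OF sub]) (use S_sets Bsets Bsub lmeasurable_interval fmeasurableI2 in auto)
  also have "\<dots> \<le> (\<Sum>q\<in>{J..<K}. measure lebesgue {ob q..<ob q + Lb q})"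
    unfolding B_def by (rule measure_UNION_le) auto
  also have "\<dots> = (\<Sum>q\<in>{J..<K}. Lb q)" using Le_nn by simp
  finally show ?thesis .
qed

lemma key0:
  assumes t: "t \<ge> 0" and J: "s \<le> ob J" and K: "J \<le> K" "ob K - g K < s + t" "0 < g K"
  shows "t - measure lebesgue (S \<inter> {s..s+t}) > ob K - g K - ob J - (\<Sum>q\<in>{J..<K}. Lb q)"
proof -
  define x where "x = t - measure lebesgue (S \<inter> {s..s+t})"
  have "measure lebesgue (S \<inter> {s..s+t}) \<le> t"
  proof -
    have "measure lebesgue (S \<inter> {s..s+t}) \<le> measure lebesgue {s..s+t}"
      by (rule measure_mono_fmeasurable) (use S_sets lmeasurable_interval in auto)
    then show ?thesis using t by simp
  qed
  then have x0: "x \<ge> 0" unfolding x_def by simp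
  have Sn: "(\<Sum>q\<in>{J..<K}. Lb q) \<ge> 0" using Le_nn by (simp add: sum_nonneg)
  define e1 where "e1 = max (ob K - g K) (ob J)"
  define e2 where "e2 = min (s + t) (ob K)"
  show ?thesis
  proof (cases "e1 < e2")
    case True
    define e where "e = (e1 + e2) / 2"
    have e: "e1 < e" "e < e2" using True unfolding e_def by auto
    have "x \<ge> (e - ob J) - measure lebesgue (S \<inter> {ob J..e})"
      unfolding x_def by (rule nonST_lower) (use t J e e1_def e2_def in auto)
    moreover have "measure lebesgue (S \<inter> {ob J..e}) \<le> (\<Sum>q\<in>{J..<K}. Lb q)"
      by (rule cover) (use K e e2_def in auto)
    ultimately show ?thesis using e e1_def unfolding x_def by auto
  next
    case False
    then have "ob K - g K < ob J" using K unfolding e1_def e2_def by auto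
    then show ?thesis using x0 Sn unfolding x_def by auto
  qed
qed

end



context gcl begin

lemma J_exists: "\<exists>J. s \<le> ob J \<and> (\<forall>K. s \<le> ob K \<longrightarrow> J \<le> K)"
proof -
  define d where "d = \<lfloor>(s - off 0) / p\<rfloor>"
  have o1: "ob (int N * d) = off 0 + p * of_int d" using oe_dec[of 0 d] N1 by simp
  have o2: "ob (int N * d + int N) = off 0 + p * (of_int d + 1)"
    using oe_dec[of 0 "d+1"] N1 by (simp add: algebra_simps)
  have "p * of_int d \<le> s - off 0"
  proof -
    have "of_int d \<le> (s - off 0) / p" unfolding d_def by simp
    then show ?thesis using ppos by (simp add: field_simps)
  qed
  moreover have "s - off 0 < p * (of_int d + 1)"
  proof -
    have "(s - off 0) / p < of_int d + 1" unfolding d_def by linarith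
    then show ?thesis using ppos by (simp add: field_simps)
  qed
  ultimately have lo: "ob (int N * d) \<le> s" and hi: "s < ob (int N * d + int N)" using o1 o2 by auto
  define M where "M = {K \<in> {int N * d .. int N * d + int N}. s \<le> ob K}"
  have Mfin: "finite M" unfolding M_def
    by (rule finite_subset[of _ "{int N * d .. int N * d + int N}"]) auto
  have Mne: "int N * d + int N \<in> M" unfolding M_def using hi by auto
  define J where "J = Min M"
  have "J \<in> M" unfolding J_def using Mfin Mne Min_in by blast
  then have sJ: "s \<le> ob J" unfolding M_def by auto
  have "J \<le> K" if "s \<le> ob K" for K
  proof (cases "K < int N * d")
    case True
    then have "ob K < ob (int N * d)" using mono_oe_iff by simp
    then show ?thesis using lo that by simp
  next
    case False
    show ?thesis
    proof (cases "K \<le> int N * d + int N")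
      case True
      then have "K \<in> M" unfolding M_def using False that by auto
      then show ?thesis unfolding J_def using Mfin by simp
    next
      case False
      moreover have "J \<le> int N * d + int N" unfolding J_def using Mfin Mne by simp
      ultimately show ?thesis by simp
    qed
  qed
  then show ?thesis using sJ by blast
qed

lemma main_bound:
  assumes t: "t \<ge> 0" and J: "s \<le> ob J" "\<And>K. s \<le> ob K \<Longrightarrow> J \<le> K"
  shows "C * measure lebesgue (G \<inter> {s..s+t}) \<le> A J (t - measure lebesgue (S \<inter> {s..s+t}))"
proof -
  define x where "x = t - measure lebesgue (S \<inter> {s..s+t})"
  have "measure lebesgue (S \<inter> {s..s+t}) \<le> measure lebesgue {s..s+t}"
    by (rule measure_mono_fmeasurable) (use S_sets lmeasurable_interval in auto)
  then have x0: "x \<ge> 0" unfolding x_def using t by simp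
  define W where "W = {J .. J + int N - 1}"
  define y where "y k = (x - (ob k - ob J) + g k + (\<Sum>q \<in> {J .. k}. Lb q)) / (p - Lt)" for k
  define n where "n k = nat \<lceil>y k\<rceil>" for k
  define Aset where "Aset = {K. s < ob K \<and> ob K - g K < s + t \<and> 0 < g K}"
  define U where "U = (\<lambda>(k,m). k + int N * int m) ` (SIGMA k:W. {..<n k})"
  have Ufin: "finite U" unfolding U_def W_def by auto
  have AU: "Aset \<subseteq> U"
  proof
    fix K assume K: "K \<in> Aset"
    have JK: "J \<le> K" using J(2)[of K] K unfolding Aset_def by auto
    define k where "k = J + (K - J) mod int N"
    define m where "m = (K - J) div int N"
    have m0: "m \<ge> 0" unfolding m_def using JK N1 by (simp add: pos_imp_zdiv_nonneg_iff)
    have Kkm: "K = k + int N * m" unfolding k_def m_def by simp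
    have kW: "k \<in> W" unfolding W_def k_def using N1 
      by (auto simp: pos_mod_bound[of "int N"] less_le_trans)
    have kW': "J \<le> k" "k \<le> J + int N - 1" using kW unfolding W_def by auto
    have "x > ob K - g K - ob J - (\<Sum>q\<in>{J..<K}. Lb q)"
      unfolding x_def by (rule key0) (use t J JK K Aset_def in auto)
    moreover have "ob K = ob k + p * of_int m" unfolding Kkm by (rule oe_shift)
    moreover have "g K = g k" unfolding Kkm by (rule LG_shift)
    moreover have "(\<Sum>q\<in>{J..<K}. Lb q) = (\<Sum>q\<in>{J..<k}. Lb q) + of_int m * Lt"
    proof -
      have "(\<Sum>q\<in>{k..<K}. Lb q) = of_nat (nat m) * Lt"
        using multi_sum[of k "nat m"] m0 Kkm by simp
      then show ?thesis using sum_int_concat[of J k K Lb] kW' Kkm m0 by simp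
    qed
    moreover have "(\<Sum>q\<in>{J..k}. Lb q) = (\<Sum>q\<in>{J..<k}. Lb q) + Lb k"
    proof -
      have "{J..k} = {J..<k} \<union> {k}" using kW' by auto
      then show ?thesis by simp
    qed
    moreover have "Lb k \<ge> 0" by (rule Le_nn)
    ultimately have "of_int m * (p - Lt) < x - (ob k - ob J) + g k + (\<Sum>q \<in> {J .. k}. Lb q)"
      by (simp add: algebra_simps)
    then have "of_int m < y k" unfolding y_def using Lt_lt by (simp add: field_simps)
    then have "m < \<lceil>y k\<rceil>" by linarith
    then have "nat m < n k" unfolding n_def using nat_less_eq_zless[OF m0, of "\<lceil>y k\<rceil>"] by blast
    then show "K \<in> U" unfolding U_def using kW Kkm m0
      by (auto intro!: image_eqI[where x="(k, nat m)"])
  qed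
  have Afin: "finite Aset" using AU Ufin finite_subset by blast
  define I where "I = {s..s+t}"
  define B where "B K = {ob K - g K..<ob K} \<inter> I" for K
  have sub: "G \<inter> I \<subseteq> (\<Union>K\<in>Aset. B K) \<union> {s+t}"
  proof
    fix z assume z: "z \<in> G \<inter> I"
    then obtain K where K: "ob K - g K \<le> z" "z < ob K" unfolding GB_set_def by auto
    show "z \<in> (\<Union>K\<in>Aset. B K) \<union> {s+t}"
    proof (cases "z = s + t")
      case False
      then have "z < s + t" "s \<le> z" using z unfolding I_def by auto
      then have "K \<in> Aset" unfolding Aset_def using K by auto
      then show ?thesis using K z unfolding B_def by auto
    qed simp
  qed
  have "measure lebesgue (G \<inter> I) \<le> measure lebesgue ((\<Union>K\<in>Aset. B K) \<union> {s+t})"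
    by (rule measure_mono_fmeasurable[OF sub])
       (use G_sets Afin t in \<open>auto simp: I_def B_def intro!: fmeasurableI2[of "{s..s+t}"] lmeasurable_interval\<close>)
  also have "\<dots> \<le> measure lebesgue (\<Union>K\<in>Aset. B K) + measure lebesgue {s+t}"
    by (rule measure_Un_le) (use Afin in \<open>auto simp: B_def I_def\<close>)
  also have "measure lebesgue {s+t} = 0"
  proof -
    have "{s+t} = {s+t..s+t}" by simp
    then show ?thesis by (metis diff_self atLeastAtMost_iff order_refl if_P measure_lborel_Icc measure_completion sets_lborel atLeastAtMost_borel)
  qed
  also have "measure lebesgue (\<Union>K\<in>Aset. B K) \<le> (\<Sum>K\<in>Aset. measure lebesgue (B K))"
    by (rule measure_UNION_le) (use Afin in \<open>auto simp: B_def I_def\<close>)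
  also have "\<dots> \<le> (\<Sum>K\<in>Aset. g K)"
  proof (rule sum_mono)
    fix K assume "K \<in> Aset"
    have "measure lebesgue (B K) \<le> measure lebesgue {ob K - g K..<ob K}"
      unfolding B_def by (rule measure_mono_fmeasurable)
        (auto simp: I_def intro!: fmeasurableI2[of "{ob K - g K..ob K}"] lmeasurable_interval)
    then show "measure lebesgue (B K) \<le> g K" using LG_nn[of K] by simp
  qed
  also have "\<dots> \<le> (\<Sum>K\<in>U. g K)"
    by (rule sum_mono2[OF Ufin AU]) (use LG_nn in auto)
  also have "\<dots> \<le> (\<Sum>(k,m)\<in>(SIGMA k:W. {..<n k}). g (k + int N * int m))"
    unfolding U_def using sum_image_le[of "SIGMA k:W. {..<n k}" g "\<lambda>(k,m). k + int N * int m"]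
      LG_nn W_def by (auto simp: comp_def prod.case_distrib)
  also have "\<dots> = (\<Sum>k\<in>W. \<Sum>m\<in>{..<n k}. g (k + int N * int m))"
    by (subst sum.Sigma) (auto simp: W_def)
  also have "\<dots> = (\<Sum>k\<in>W. g k * real (n k))"
    by (rule sum.cong) (simp_all only: LG_shift sum_constant card_lessThan, simp)
  finally have bound: "measure lebesgue (G \<inter> I) \<le> (\<Sum>k\<in>W. g k * real (n k))" by simp
  have "C * measure lebesgue (G \<inter> I) \<le> C * (\<Sum>k\<in>W. g k * real (n k))"
    using bound Cpos by simp
  also have "\<dots> = (\<Sum>k\<in>W. g k * C * of_int \<lceil>y k\<rceil>)"
    unfolding sum_distrib_left
  proof (rule sum.cong)
    fix k assume "k \<in> W"
    then have "\<lceil>y k\<rceil> \<ge> 0" unfolding y_def W_def using ceil_nonneg[OF x0] by auto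
    then have "real (n k) = of_int \<lceil>y k\<rceil>" unfolding n_def by simp
    then show "C * (g k * real (n k)) = g k * C * of_int \<lceil>y k\<rceil>" by simp
  qed simp
  also have "\<dots> = A J x"
    unfolding A_def y_def W_def den_eq ..
  finally show ?thesis unfolding x_def I_def .
qed

end


theorem theorem4:
  fixes N :: nat and p C ell :: real and off L :: "nat \<Rightarrow> real" and s t :: real
  assumes "C > 0" and "p > 0" and "N \<ge> 1" and "ell > 0"
    and "0 \<le> off 0"
    and "\<And>k. k + 1 < N \<Longrightarrow> off k < off (k + 1)"
    and "off (N - 1) < p"
    and "\<And>k. k < N \<Longrightarrow> L k \<ge> 0"
    and "\<And>k. k + 1 < N \<Longrightarrow> off k + L k \<le> off (k + 1)"
    and "off (N - 1) + L (N - 1) \<le> off 0 + p"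
    and "p > (\<Sum>k<N. L k)"
    and "t \<ge> 0"
  shows "C * dt_GB N p off L C ell s (s + t)
           \<le> Max ((\<lambda>j. alpha_GB N p off L C ell j (t - dt_ST N p off L s (s + t))) ` {0..<N})"
proof -
  interpret gcl N p C ell off L by unfold_locales (use assms in auto)
  obtain J where J: "s \<le> oe N p off J" "\<And>K. s \<le> oe N p off K \<Longrightarrow> J \<le> K"
    using J_exists[of s] by blast
  define x where "x = t - dt_ST N p off L s (s + t)"
  have b: "C * dt_GB N p off L C ell s (s + t) \<le> A J x"
    unfolding dt_GB_def x_def dt_ST_def by (rule main_bound) (use assms(12) J in auto)
  define j0 where "j0 = nat (J mod int N)"
  have j0N: "j0 \<in> {0..<N}" unfolding j0_def using assms(3)
    by (simp add: nat_less_iff)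
  have "J = int j0 + int N * (J div int N)" unfolding j0_def using assms(3) by simp
  then have "A J x = A (int j0) x" using A_shift[of "int j0" "J div int N" x] by simp
  also have "\<dots> = alpha_GB N p off L C ell j0 x" by (rule alpha_eq[symmetric])
  also have "\<dots> \<le> Max ((\<lambda>j. alpha_GB N p off L C ell j x) ` {0..<N})"
    by (rule Max_ge) (use j0N in auto)
  finally show ?thesis using b unfolding x_def by linarith
qed

end
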